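(* Let $\mathcal{B}:\mathbb{R}[x_1,x_2]_{2d}\to\mathbb{R}^m$ be a linear map and $b\in\mathbb{R}^m$, and suppose there exists $p\in\Sigma[x_1,x_2]_{2d}$ with $\mathcal{B}(p)=b$. Define $f_{\mathcal{B}}(\mathbf{u})=\|\mathcal{B}(u_1^2+u_2^2)-b\|^2$ for $\mathbf{u}=(u_1,u_2)\in\mathbb{R}[x_1,x_2]_d^2$. If $\nabla f_{\mathcal{B}}(\mathbf{u})=0$ and $\nabla^2 f_{\mathcal{B}}(\mathbf{u})\succeq0$, then $f_{\mathcal{B}}(\mathbf{u})=0$.
   Context: $\mathbb{R}[x_1,x_2]_n$ denotes the space of real binary forms (homogeneous polynomials in $x_1,x_2$) of degree $n$, and $\Sigma[x_1,x_2]_{2d}$ the cone of sums of squares of binary forms of degree $d$. $\|\cdot\|$ is the norm induced by an inner product on $\mathbb{R}^m$ (e.g. the Euclidean one). Derivatives are taken with respect to the finite-dimensional real vector space $\mathbb{R}[x_1,x_2]_d^2$: $\nabla f_{\mathcal{B}}(\mathbf{u})=0$ means all first directional derivatives vanish, and $\nabla^2 f_{\mathcal{B}}(\mathbf{u})\succeq0$ means all second directional derivatives are nonnegative. *)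

theory Defs
  imports "HOL-Analysis.Analysis" "HOL-Computational_Algebra.Polynomial"
begin

text \<open>A real binary form of degree n, sum over i of c_i x1^i x2^(n-i), is represented by
  the univariate polynomial sum of c_i t^i (of degree at most n).  This identification is
  a linear bijection that is compatible with products (the product of forms of degrees
  n and k corresponds to the product of the polynomials).\<close>

definition binary_forms :: "nat \<Rightarrow> real poly set" where
  "binary_forms n = {p. degree p \<le> n}"

definition form_eval :: "nat \<Rightarrow> real poly \<Rightarrow> real \<Rightarrow> real \<Rightarrow> real" where
  "form_eval n p x1 x2 = (\<Sum>i\<le>n. coeff p i * x1 ^ i * x2 ^ (n - i))"

definition sos_forms :: "nat \<Rightarrow> real poly set" where
  "sos_forms d = {p. \<exists>qs. set qs \<subseteq> binary_forms d \<and> p = sum_list (map (\<lambda>q. q ^ 2) qs)}"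

definition linear_on_forms :: "nat \<Rightarrow> (real poly \<Rightarrow> 'a::real_vector) \<Rightarrow> bool" where
  "linear_on_forms n B \<longleftrightarrow>
     (\<forall>p\<in>binary_forms n. \<forall>q\<in>binary_forms n. B (p + q) = B p + B q) \<and>
     (\<forall>c. \<forall>p\<in>binary_forms n. B (smult c p) = c *\<^sub>R B p)"

definition f_B :: "(real poly \<Rightarrow> 'a::real_normed_vector) \<Rightarrow> 'a \<Rightarrow> real poly \<times> real poly \<Rightarrow> real" where
  "f_B B b u = (norm (B (fst u ^ 2 + snd u ^ 2) - b)) ^ 2"

definition line_pt :: "real poly \<times> real poly \<Rightarrow> real poly \<times> real poly \<Rightarrow> real \<Rightarrow> real poly \<times> real poly" where
  "line_pt u v t = (fst u + smult t (fst v), snd u + smult t (snd v))"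

end

theory Submission
  imports Defs "HOL-Computational_Algebra.Computational_Algebra" "HOL-Computational_Algebra.Field_as_Ring" begin

definition rv :: "nat \<Rightarrow> real poly \<Rightarrow> real poly" where
  "rv n p = (\<Sum>i\<le>n. monom (coeff p i) (n - i))"

lemma coeff_rv: "coeff (rv n p) j = (if j \<le> n then coeff p (n - j) else 0)"
proof -
  have "coeff (rv n p) j = (\<Sum>i\<le>n. if n - i = j then coeff p i else 0)"
    by (simp add: rv_def coeff_sum coeff_monom)
  also have "\<dots> = (\<Sum>i\<le>n. if i = n - j then (if j \<le> n then coeff p i else 0) else 0)"
    by (rule sum.cong) auto
  also have "\<dots> = (if j \<le> n then coeff p (n - j) else 0)"
    by (simp add: sum.delta)
  finally show ?thesis .
qed

lemma degree_rv: "degree (rv n p) \<le> n"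
  by (rule degree_le) (simp add: coeff_rv)

lemma rv_rv: "degree p \<le> n \<Longrightarrow> rv n (rv n p) = p"
  by (rule poly_eqI) (auto simp: coeff_rv coeff_eq_0)

lemma rv_add: "rv n (p + q) = rv n p + rv n q"
  by (rule poly_eqI) (auto simp: coeff_rv)

lemma rv_smult: "rv n (smult c p) = smult c (rv n p)"
  by (rule poly_eqI) (auto simp: coeff_rv)

lemma rv_0 [simp]: "rv n 0 = 0"
  by (rule poly_eqI) (auto simp: coeff_rv)

lemma rv_reflect: "degree p \<le> n \<Longrightarrow> rv n p = reflect_poly p * monom 1 (n - degree p)"
  apply (rule poly_eqI)
  apply (subst mult.commute)
  apply (auto simp: coeff_rv coeff_monom_mult coeff_reflect_poly coeff_eq_0)
  done

lemma rv_mult: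
  assumes "degree p \<le> n" "degree q \<le> m"
  shows "rv (n+m) (p*q) = rv n p * rv m q"
proof (cases "p = 0 \<or> q = 0")
  case True then show ?thesis by auto
next
  case False
  then have dpq: "degree (p*q) = degree p + degree q" by (simp add: degree_mult_eq)
  have "rv (n+m) (p*q) = reflect_poly (p*q) * monom 1 (n + m - degree (p*q))"
    using assms dpq by (intro rv_reflect) simp
  also have "\<dots> = (reflect_poly p * monom 1 (n - degree p)) * (reflect_poly q * monom 1 (m - degree q))"
    using assms dpq by (simp add: reflect_poly_mult mult_monom algebra_simps)
  also have "\<dots> = rv n p * rv m q"
    using assms by (simp add: rv_reflect)
  finally show ?thesis .
qed

definition sh :: "real \<Rightarrow> real poly \<Rightarrow> real poly" where
  "sh c p = pcompose p [:c, 1:]"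

lemma degree_sh [simp]: "degree (sh c p) = degree p"
  by (simp add: sh_def degree_pcompose)

lemma sh_sh: "sh (-c) (sh c p) = p"
proof -
  have "pcompose [:c, 1:] [:-c, 1:] = [:0, 1:]" by (simp add: pcompose_pCons)
  then show ?thesis by (simp add: sh_def pcompose_assoc[symmetric])
qed

lemma sh_sh': "sh c (sh (-c) p) = p"
  using sh_sh[of "-c" p] by simp

lemma sh_add: "sh c (p + q) = sh c p + sh c q" by (simp add: sh_def pcompose_add)
lemma sh_smult: "sh c (smult a p) = smult a (sh c p)" by (simp add: sh_def pcompose_smult)
lemma sh_mult: "sh c (p * q) = sh c p * sh c q" by (simp add: sh_def pcompose_mult)
lemma sh_0 [simp]: "sh c 0 = 0" by (simp add: sh_def)
lemma coeff_sh_0: "coeff (sh c p) 0 = poly p c" by (simp add: sh_def pcompose_coeff_0)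


lemma span_coprime:
  fixes a b P :: "real poly"
  assumes cop: "coprime a b" and a0: "a \<noteq> 0" and db: "degree b \<le> degree a"
    and dP: "degree P \<le> d + degree a" and dad: "degree a \<le> d"
  shows "\<exists>X Y. degree X \<le> d \<and> degree Y \<le> d \<and> P = a*X + b*Y"
proof -
  have "gcd a b = 1" using cop by (simp add: coprime_imp_gcd_eq_1)
  then obtain x y where xy: "x*a + y*b = 1"
    using bezout_coefficients_fst_snd[of a b] by metis
  define Y where "Y = (y*P) mod a"
  define X where "X = x*P + ((y*P) div a)*b"
  have "P = P * (x*a + y*b)" using xy by simp
  also have "\<dots> = a*(x*P) + b*(y*P)" by (simp add: algebra_simps)
  also have "y*P = ((y*P) div a)*a + Y" unfolding Y_def by simp
  finally have eq: "P = a*X + b*Y" unfolding X_def by (simp add: algebra_simps)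
  have dY: "Y = 0 \<or> degree Y < degree a"
    using degree_mod_less[OF a0, of "y*P"] unfolding Y_def by auto
  have dbY: "degree (b*Y) \<le> d + degree a"
  proof (cases "Y = 0")
    case True then show ?thesis by simp
  next
    case False
    then have "degree Y < degree a" using dY by simp
    then show ?thesis using degree_mult_le[of b Y] db dad by linarith
  qed
  have dX: "degree X \<le> d"
  proof (cases "X = 0")
    case True then show ?thesis by simp
  next
    case False
    have "a*X = P - b*Y" using eq by simp
    then have "degree (a*X) \<le> d + degree a"
      using degree_diff_le[OF dP dbY] by simp
    then show ?thesis using degree_mult_eq[OF a0 False] by simp
  qed
  have dY': "degree Y \<le> d"
  proof (cases "Y = 0")
    case True then show ?thesis by simp
  next
    case False
    then have "degree Y < degree a" using dY by simp
    then show ?thesis using dad by simp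
  qed
  show ?thesis using eq dX dY' by blast
qed


lemma core_deg:
  fixes L :: "real poly \<Rightarrow> real" and u1 u2 s :: "real poly" and d :: nat
  assumes add: "\<And>p q. L (p+q) = L p + L q" and sm: "\<And>c p. L (smult c p) = c * L p"
    and u1: "u1 \<noteq> 0" "degree u1 = d" and u2: "degree u2 \<le> d"
    and ha1: "\<And>w. degree w \<le> d \<Longrightarrow> L (u1*w) = 0"
    and ha2: "\<And>w. degree w \<le> d \<Longrightarrow> L (u2*w) = 0"
    and hb: "\<And>n1 n2. degree n1 \<le> d \<Longrightarrow> degree n2 \<le> d \<Longrightarrow> u1*n1+u2*n2 = 0 \<Longrightarrow> L (n1^2 + n2^2) \<ge> 0"
    and hc: "\<And>n1 n2 w. degree n1 \<le> d \<Longrightarrow> degree n2 \<le> d \<Longrightarrow> u1*n1+u2*n2 = 0 \<Longrightarrow>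
               L (n1^2+n2^2) = 0 \<Longrightarrow> degree w \<le> d \<Longrightarrow> L (n1*w) = 0 \<and> L (n2*w) = 0"
    and s: "degree s \<le> d"
  shows "L (s^2) \<ge> 0"
proof -
  have L0: "L 0 = 0" using add[of 0 0] by simp
  have Lneg: "L (-p) = - L p" for p using sm[of "-1" p] by simp
  have Ldiff: "L (p - q) = L p - L q" for p q using add[of p "-q"] Lneg by simp
  define g where "g = gcd u1 u2"
  have g0: "g \<noteq> 0" using u1 by (simp add: g_def)
  define a where "a = u1 div g"
  define b where "b = u2 div g"
  have u1e: "u1 = g*a" unfolding a_def g_def by simp
  have u2e: "u2 = g*b" unfolding b_def g_def by simp
  have cop: "coprime a b" unfolding a_def b_def g_def using u1 by (simp add: div_gcd_coprime)
  have a0: "a \<noteq> 0" using u1 u1e by auto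
  define e where "e = degree g"
  define k where "k = degree a"
  have dek: "e + k = d" using u1 u1e degree_mult_eq[OF g0 a0] by (simp add: e_def k_def)
  have dbk: "degree b \<le> k"
  proof (cases "b = 0")
    case True then show ?thesis by simp
  next
    case False
    then have "degree u2 = e + degree b" using u2e degree_mult_eq[OF g0 False] by (simp add: e_def)
    then show ?thesis using u2 dek by simp
  qed
  have span: "\<exists>X Y. degree X \<le> d \<and> degree Y \<le> d \<and> P = a*X + b*Y" if "degree P \<le> d + k" for P
    using span_coprime[OF cop a0, of P d] dbk that dek by (simp add: k_def)
  have Lg: "L (g*P) = 0" if dP: "degree P \<le> d + k" for P
  proof -
    obtain X Y where XY: "degree X \<le> d" "degree Y \<le> d" "P = a*X + b*Y" using span[OF dP] by blast
    have "g*P = u1*X + u2*Y" using XY u1e u2e by (simp add: algebra_simps)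
    then show ?thesis using ha1[OF XY(1)] ha2[OF XY(2)] add by simp
  qed
  define \<Lambda> where "\<Lambda> p = L (p mod g)" for p
  have \<Lambda>add: "\<Lambda> (p + q) = \<Lambda> p + \<Lambda> q" for p q by (simp add: \<Lambda>_def poly_mod_add_left add)
  have \<Lambda>sm: "\<Lambda> (smult c p) = c * \<Lambda> p" for c p by (simp add: \<Lambda>_def mod_smult_left sm)
  have \<Lambda>diff: "\<Lambda> (p - q) = \<Lambda> p - \<Lambda> q" for p q by (simp add: \<Lambda>_def poly_mod_diff_left Ldiff)
  have \<Lambda>dvd: "\<Lambda> p = \<Lambda> q" if "g dvd (p - q)" for p q
  proof -
    have "(p - q) mod g = 0" using that by simp
    then have "\<Lambda> (p - q) = 0" by (simp add: \<Lambda>_def L0)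
    then show ?thesis using \<Lambda>diff by simp
  qed
  have \<Lambda>g: "\<Lambda> (g*z) = 0" for z by (simp add: \<Lambda>_def L0)
  have \<Lambda>L: "\<Lambda> p = L p" if dp: "degree p \<le> 2*d" for p
  proof -
    define D where "D = p div g"
    have pe: "p = g*D + p mod g" unfolding D_def by simp
    have dD: "degree D \<le> d + k"
    proof (cases "D = 0")
      case True then show ?thesis by simp
    next
      case False
      have "degree (p mod g) \<le> 2*d"
        using degree_mod_less[OF g0, of p] dek e_def by auto
      then have "degree (g*D) \<le> 2*d"
        using degree_diff_le[OF dp, of "p mod g"] pe by (metis add_diff_cancel_right')
      then show ?thesis using degree_mult_eq[OF g0 False] dek e_def by simp
    qed
    have "L p = L (g*D) + L (p mod g)" using pe add by metis
    then show ?thesis using Lg[OF dD] by (simp add: \<Lambda>_def)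
  qed
  have red: "\<exists>h'. degree h' \<le> e \<and> g dvd (h - h')" for h
  proof -
    have "g dvd (h - h mod g)" by (metis div_mult_mod_eq dvd_triv_right add_diff_cancel_right')
    moreover have "degree (h mod g) \<le> e" using degree_mod_less[OF g0, of h] e_def by auto
    ultimately show ?thesis by blast
  qed
  define m where "m = a^2 + b^2"
  have nvec: "u1*(b*h') + u2*(-(a*h')) = 0" for h' using u1e u2e by (simp add: algebra_simps)
  have nsq: "(b*h')^2 + (-(a*h'))^2 = h'^2 * m" for h' by (simp add: m_def algebra_simps power2_eq_square)
  have dn1: "degree (b*h') \<le> d" if "degree h' \<le> e" for h'
    using degree_mult_le[of b h'] that dbk dek by linarith
  have dn2: "degree (-(a*h')) \<le> d" if "degree h' \<le> e" for h'
    using degree_mult_le[of a h'] that dek k_def by simp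
  have dhm: "degree (h'^2 * m) \<le> 2*d" if "degree h' \<le> e" for h'
  proof -
    have "degree (h'^2*m) = degree ((b*h')^2 + (-(a*h'))^2)" by (simp only: nsq)
    also have "\<dots> \<le> 2*d"
    proof (rule degree_add_le)
      show "degree ((b*h')^2) \<le> 2*d" using dn1[OF that] degree_power_le[of "b*h'" 2] by simp
      show "degree ((-(a*h'))^2) \<le> 2*d" using dn2[OF that] degree_power_le[of "-(a*h')" 2] by simp
    qed
    finally show ?thesis .
  qed
  have dvd_sq: "g dvd (h^2*m - h'^2*m)" if "g dvd (h - h')" for h h'
  proof -
    have "h^2*m - h'^2*m = (h - h')*((h+h')*m)" by (simp add: algebra_simps power2_eq_square)
    then show ?thesis using that by simp
  qed
  have Pnn: "\<Lambda> (h^2 * m) \<ge> 0" for h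
  proof -
    obtain h' where h': "degree h' \<le> e" "g dvd (h - h')" using red by blast
    have "\<Lambda> (h^2*m) = \<Lambda> (h'^2*m)" using \<Lambda>dvd dvd_sq[OF h'(2)] by blast
    also have "\<dots> = L (h'^2*m)" using \<Lambda>L dhm[OF h'(1)] by blast
    also have "\<dots> = L ((b*h')^2 + (-(a*h'))^2)" by (simp only: nsq)
    also have "\<dots> \<ge> 0" using hb[OF dn1[OF h'(1)] dn2[OF h'(1)] nvec] .
    finally show ?thesis by simp
  qed
  have Prad: "\<Lambda> (h*z) = 0" if h0: "\<Lambda> (h^2 * m) = 0" for h z
  proof -
    obtain h' where h': "degree h' \<le> e" "g dvd (h - h')" using red by blast
    have "\<Lambda> (h^2*m) = \<Lambda> (h'^2*m)" using \<Lambda>dvd dvd_sq[OF h'(2)] by blast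
    also have "\<dots> = L (h'^2*m)" using \<Lambda>L dhm[OF h'(1)] by blast
    also have "\<dots> = L ((b*h')^2 + (-(a*h'))^2)" by (simp only: nsq)
    finally have z0: "L ((b*h')^2 + (-(a*h'))^2) = 0" using h0 by simp
    have hcv: "L ((b*h')*w) = 0 \<and> L ((-(a*h'))*w) = 0" if "degree w \<le> d" for w
      using hc[OF dn1[OF h'(1)] dn2[OF h'(1)] nvec z0 that] .
    define zr where "zr = z mod g"
    have dzr: "degree zr \<le> d + k" using degree_mod_less[OF g0, of z] dek e_def zr_def by auto
    obtain X Y where XY: "degree X \<le> d" "degree Y \<le> d" "zr = a*X + b*Y" using span[OF dzr] by blast
    have dv1: "g dvd (h*z - h'*zr)"
    proof -
      have "h*z - h'*zr = (h - h')*z + h'*(z - zr)" by (simp add: algebra_simps)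
      moreover have "g dvd (z - zr)" unfolding zr_def
        by (metis div_mult_mod_eq dvd_triv_right add_diff_cancel_right')
      ultimately show ?thesis using h'(2) by simp
    qed
    have "\<Lambda> (h*z) = \<Lambda> (h'*zr)" using \<Lambda>dvd[OF dv1] .
    also have "h'*zr = - ((-(a*h'))*X) + (b*h')*Y" using XY(3) by (simp add: algebra_simps)
    also have "\<Lambda> (- ((-(a*h'))*X) + (b*h')*Y) = - \<Lambda> ((-(a*h'))*X) + \<Lambda> ((b*h')*Y)"
      using \<Lambda>add \<Lambda>sm[of "-1"] by simp
    also have "\<Lambda> ((-(a*h'))*X) = L ((-(a*h'))*X)"
    proof (rule \<Lambda>L)
      show "degree (-(a*h')*X) \<le> 2*d" using degree_mult_le[of "-(a*h')" X] dn2[OF h'(1)] XY(1) by simp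
    qed
    also have "\<Lambda> ((b*h')*Y) = L ((b*h')*Y)"
    proof (rule \<Lambda>L)
      show "degree ((b*h')*Y) \<le> 2*d" using degree_mult_le[of "b*h'" Y] dn1[OF h'(1)] XY(2) by simp
    qed
    finally show ?thesis using hcv[OF XY(1)] hcv[OF XY(2)] by simp
  qed
  define R where "R = {h. \<forall>z. \<Lambda> (h*z) = 0}"
  have gR: "g \<in> R" unfolding R_def using \<Lambda>g by simp
  have Rmul: "h*z \<in> R" if "h \<in> R" for h z using that unfolding R_def by (simp add: mult.assoc)
  have mR: "y \<in> R" if "m*y \<in> R" for y
  proof -
    have "\<Lambda> ((m*y)*y) = 0" using that unfolding R_def by blast
    then have "\<Lambda> (y^2*m) = 0" by (simp add: algebra_simps power2_eq_square)
    then show ?thesis unfolding R_def using Prad by blast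
  qed
  have ex: "\<forall>y. y \<in> R \<longrightarrow> y \<noteq> 0 \<longrightarrow> (\<exists>y'\<in>R. y' \<noteq> 0 \<and> coprime y' m)"
  proof (rule allI)
    fix y0 :: "real poly"
    show "y0 \<in> R \<longrightarrow> y0 \<noteq> 0 \<longrightarrow> (\<exists>y'\<in>R. y' \<noteq> 0 \<and> coprime y' m)"
    proof (induction "degree y0" arbitrary: y0 rule: less_induct)
      case less
      show ?case
      proof (intro impI)
        assume yR: "y0 \<in> R" and y0: "y0 \<noteq> 0"
        show "\<exists>y'\<in>R. y' \<noteq> 0 \<and> coprime y' m"
        proof (cases "coprime y0 m")
          case True then show ?thesis using yR y0 by blast
        next
          case False
          define c where "c = gcd y0 m"
          have c0: "c \<noteq> 0" using y0 by (simp add: c_def)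
          have "\<not> is_unit c" using False unfolding c_def by (metis is_unit_gcd)
          then have dc: "degree c > 0" using is_unit_iff_degree[OF c0] by simp
          define y1 where "y1 = y0 div c"
          have ye: "y0 = c*y1" unfolding y1_def c_def by simp
          have y10: "y1 \<noteq> 0" using ye y0 by auto
          have "degree y0 = degree c + degree y1" using ye degree_mult_eq[OF c0 y10] by simp
          then have dlt: "degree y1 < degree y0" using dc by simp
          have me: "m = c*(m div c)" unfolding c_def by simp
          have "m*y1 = (m div c)*y0" using ye me by (metis mult.assoc mult.commute)
          then have "m*y1 \<in> R" using Rmul[OF yR, of "m div c"] by (simp add: mult.commute)
          then have "y1 \<in> R" using mR by blast
          then show ?thesis using less(1)[OF dlt] y10 by blast
        qed
      qed
    qed
  qed
  obtain y where yR: "y \<in> R" and ycop: "coprime y m" using ex gR g0 by blast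
  have "gcd m y = 1" using ycop by (simp add: coprime_imp_gcd_eq_1 coprime_commute)
  then have "fst (bezout_coefficients m y) * m + snd (bezout_coefficients m y) * y = 1"
    using bezout_coefficients_fst_snd[of m y] by simp
  then obtain \<mu> \<nu> where mn: "\<mu>*m + \<nu>*y = 1" by blast
  have key: "\<Lambda> z = \<Lambda> (z*(\<mu>*m))" for z
  proof -
    have "z*(\<mu>*m) + y*(z*\<nu>) = z*(\<mu>*m + \<nu>*y)" by (simp add: algebra_simps)
    then have "z = z*(\<mu>*m) + y*(z*\<nu>)" using mn by simp
    then have "\<Lambda> z = \<Lambda> (z*(\<mu>*m) + y*(z*\<nu>))" by simp
    then have "\<Lambda> z = \<Lambda> (z*(\<mu>*m)) + \<Lambda> (y*(z*\<nu>))" using \<Lambda>add by simp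
    then show ?thesis using yR unfolding R_def by simp
  qed
  have "\<Lambda> (s^2) = \<Lambda> (s^2*(\<mu>*m)*(\<mu>*m))" using key[of "s^2"] key[of "s^2*(\<mu>*m)"] by simp
  also have "s^2*(\<mu>*m)*(\<mu>*m) = (s*a*\<mu>)^2*m + (s*b*\<mu>)^2*m"
    by (simp add: m_def algebra_simps power2_eq_square)
  also have "\<Lambda> \<dots> = \<Lambda> ((s*a*\<mu>)^2*m) + \<Lambda> ((s*b*\<mu>)^2*m)" using \<Lambda>add by simp
  finally have "\<Lambda> (s^2) \<ge> 0" using Pnn[of "s*a*\<mu>"] Pnn[of "s*b*\<mu>"] by simp
  moreover have "degree (s^2) \<le> 2*d" using degree_power_le[of s 2] s by simp
  ultimately show ?thesis using \<Lambda>L by simp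
qed


lemma core:
  fixes L :: "real poly \<Rightarrow> real" and u1 u2 s :: "real poly" and d :: nat
  assumes add: "\<And>p q. L (p+q) = L p + L q" and sm: "\<And>c p. L (smult c p) = c * L p"
    and u1: "degree u1 \<le> d" and u2: "degree u2 \<le> d"
    and ha1: "\<And>w. degree w \<le> d \<Longrightarrow> L (u1*w) = 0"
    and ha2: "\<And>w. degree w \<le> d \<Longrightarrow> L (u2*w) = 0"
    and hb: "\<And>n1 n2. degree n1 \<le> d \<Longrightarrow> degree n2 \<le> d \<Longrightarrow> u1*n1+u2*n2 = 0 \<Longrightarrow> L (n1^2 + n2^2) \<ge> 0"
    and hc: "\<And>n1 n2 w. degree n1 \<le> d \<Longrightarrow> degree n2 \<le> d \<Longrightarrow> u1*n1+u2*n2 = 0 \<Longrightarrow>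
               L (n1^2+n2^2) = 0 \<Longrightarrow> degree w \<le> d \<Longrightarrow> L (n1*w) = 0 \<and> L (n2*w) = 0"
    and s: "degree s \<le> d"
  shows "L (s^2) \<ge> 0"
proof (cases "u1 = 0")
  case True
  then show ?thesis using hb[OF s, of 0] by simp
next
  case False
  then obtain c where pc: "poly u1 c \<noteq> 0" using poly_all_0_iff_0 by blast
  define T where "T n p = rv n (sh c p)" for n p
  define S where "S n p = sh (-c) (rv n p)" for n p
  have dT: "degree (T n p) \<le> n" for n p by (simp add: T_def degree_rv)
  have dS: "degree (S n p) \<le> n" for n p by (simp add: S_def degree_rv)
  have ST: "S n (T n p) = p" if "degree p \<le> n" for n p
    using that by (simp add: S_def T_def rv_rv sh_sh)
  have TS: "T n (S n p) = p" if "degree p \<le> n" for n p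
    using that by (simp add: S_def T_def rv_rv sh_sh')
  have Tadd: "T n (p + q) = T n p + T n q" for n p q by (simp add: T_def sh_add rv_add)
  have Sadd: "S n (p + q) = S n p + S n q" for n p q by (simp add: S_def sh_add rv_add)
  have Ssm: "S n (smult a p) = smult a (S n p)" for n a p by (simp add: S_def sh_smult rv_smult)
  have S0: "S n 0 = 0" for n by (simp add: S_def)
  have Tmul: "T d p * T d q = T (2*d) (p*q)" if "degree p \<le> d" "degree q \<le> d" for p q
    using that rv_mult[of "sh c p" d "sh c q" d] by (simp add: T_def sh_mult mult_2)
  have dmul: "degree (p*q) \<le> 2*d" if "degree p \<le> d" "degree q \<le> d" for p q
    using that degree_mult_le[of p q] by simp
  define L' where "L' p = L (S (2*d) p)" for p
  have L'mul: "L' (T d p * T d q) = L (p*q)" if "degree p \<le> d" "degree q \<le> d" for p q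
    using that by (simp add: L'_def Tmul ST dmul)
  define v1 where "v1 = T d u1"
  define v2 where "v2 = T d u2"
  have cf: "coeff v1 d = poly u1 c" by (simp add: v1_def T_def coeff_rv coeff_sh_0)
  have v10: "v1 \<noteq> 0" using cf pc by auto
  have dv1: "degree v1 = d" using le_degree[of v1 d] cf pc dT[of d u1] v1_def by simp
  have conv: "\<exists>q. degree q \<le> d \<and> p = T d q" if "degree p \<le> d" for p
    using TS[OF that] dS by metis
  have res: "L' ((T d s)^2) \<ge> 0"
  proof (rule core_deg[of L' v1 d v2])
    show "L' (p + q) = L' p + L' q" for p q by (simp add: L'_def Sadd add)
    show "L' (smult a p) = a * L' p" for a p by (simp add: L'_def Ssm sm)
    show "v1 \<noteq> 0" "degree v1 = d" using v10 dv1 by auto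
    show "degree v2 \<le> d" using dT v2_def by simp
    show "degree (T d s) \<le> d" using dT by simp
    show "L' (v1 * w) = 0" if dw: "degree w \<le> d" for w
    proof -
      obtain q where q: "degree q \<le> d" "w = T d q" using conv[OF dw] by blast
      show ?thesis using L'mul[OF u1 q(1)] ha1[OF q(1)] q(2) v1_def by simp
    qed
    show "L' (v2 * w) = 0" if dw: "degree w \<le> d" for w
    proof -
      obtain q where q: "degree q \<le> d" "w = T d q" using conv[OF dw] by blast
      show ?thesis using L'mul[OF u2 q(1)] ha2[OF q(1)] q(2) v2_def by simp
    qed
    show "L' (n1^2 + n2^2) \<ge> 0" if n: "degree n1 \<le> d" "degree n2 \<le> d" "v1*n1 + v2*n2 = 0" for n1 n2
    proof -
      obtain m1 where m1: "degree m1 \<le> d" "n1 = T d m1" using conv[OF n(1)] by blast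
      obtain m2 where m2: "degree m2 \<le> d" "n2 = T d m2" using conv[OF n(2)] by blast
      have "T (2*d) (u1*m1 + u2*m2) = 0"
        using n(3) m1 m2 Tmul[OF u1 m1(1)] Tmul[OF u2 m2(1)] Tadd v1_def v2_def by simp
      then have "S (2*d) (T (2*d) (u1*m1 + u2*m2)) = 0" using S0 by simp
      then have z: "u1*m1 + u2*m2 = 0"
        using ST[OF degree_add_le[OF dmul[OF u1 m1(1)] dmul[OF u2 m2(1)]]] by simp
      have "L' (n1^2 + n2^2) = L' (T d m1 * T d m1) + L' (T d m2 * T d m2)"
        using m1 m2 by (simp add: L'_def Sadd add power2_eq_square)
      also have "\<dots> = L (m1^2 + m2^2)"
        using L'mul[OF m1(1) m1(1)] L'mul[OF m2(1) m2(1)] by (simp add: add power2_eq_square)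
      finally show ?thesis using hb[OF m1(1) m2(1) z] by simp
    qed
    show "L' (n1*w) = 0 \<and> L' (n2*w) = 0"
      if n: "degree n1 \<le> d" "degree n2 \<le> d" "v1*n1 + v2*n2 = 0" "L' (n1^2+n2^2) = 0" "degree w \<le> d"
      for n1 n2 w
    proof -
      obtain m1 where m1: "degree m1 \<le> d" "n1 = T d m1" using conv[OF n(1)] by blast
      obtain m2 where m2: "degree m2 \<le> d" "n2 = T d m2" using conv[OF n(2)] by blast
      obtain w' where w': "degree w' \<le> d" "w = T d w'" using conv[OF n(5)] by blast
      have "T (2*d) (u1*m1 + u2*m2) = 0"
        using n(3) m1 m2 Tmul[OF u1 m1(1)] Tmul[OF u2 m2(1)] Tadd v1_def v2_def by simp
      then have "S (2*d) (T (2*d) (u1*m1 + u2*m2)) = 0" using S0 by simp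
      then have z: "u1*m1 + u2*m2 = 0"
        using ST[OF degree_add_le[OF dmul[OF u1 m1(1)] dmul[OF u2 m2(1)]]] by simp
      have "L' (n1^2 + n2^2) = L' (T d m1 * T d m1) + L' (T d m2 * T d m2)"
        using m1 m2 by (simp add: L'_def Sadd add power2_eq_square)
      also have "\<dots> = L (m1^2 + m2^2)"
        using L'mul[OF m1(1) m1(1)] L'mul[OF m2(1) m2(1)] by (simp add: add power2_eq_square)
      finally have z2: "L (m1^2 + m2^2) = 0" using n(4) by simp
      have "L (m1*w') = 0 \<and> L (m2*w') = 0" using hc[OF m1(1) m2(1) z z2 w'(1)] .
      then show ?thesis using L'mul[OF m1(1) w'(1)] L'mul[OF m2(1) w'(1)] m1(2) m2(2) w'(2) by simp
    qed
  qed
  have "(T d s)^2 = T (2*d) (s * s)" using Tmul[OF s s] by (simp add: power2_eq_square)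
  then have "L' ((T d s)^2) = L (s^2)" using ST[OF dmul[OF s s]] by (simp add: L'_def power2_eq_square)
  then show ?thesis using res by simp
qed


lemma poly4_deriv:
  fixes F :: "real \<Rightarrow> real"
  assumes F: "\<And>t. F t = c0 + c1*t + c2*t^2 + c3*t^3 + c4*t^4"
  shows "(F has_real_derivative (c1 + 2*c2*t + 3*c3*t^2 + 4*c4*t^3)) (at t)"
proof -
  have e: "F = (\<lambda>t. c0 + c1*t + c2*t^2 + c3*t^3 + c4*t^4)" using F by auto
  have d1: "((\<lambda>z. c1 * z) has_real_derivative c1) (at t)"
    using DERIV_cmult[OF DERIV_ident, of c1 t] by simp
  have d2: "((\<lambda>z. c2 * z^2) has_real_derivative c2 * (2*t)) (at t)"
    using DERIV_cmult[OF DERIV_pow[of 2 t], of c2] by simp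
  have d3: "((\<lambda>z. c3 * z^3) has_real_derivative c3 * (3*t^2)) (at t)"
    using DERIV_cmult[OF DERIV_pow[of 3 t], of c3] by simp
  have d4: "((\<lambda>z. c4 * z^4) has_real_derivative c4 * (4*t^3)) (at t)"
    using DERIV_cmult[OF DERIV_pow[of 4 t], of c4] by simp
  have "((\<lambda>t. c0 + c1*t + c2*t^2 + c3*t^3 + c4*t^4) has_real_derivative
     (0 + c1 + c2 * (2*t) + c3 * (3*t^2) + c4 * (4*t^3))) (at t)"
    by (intro DERIV_add DERIV_const d1 d2 d3 d4)
  then show ?thesis unfolding e by (rule DERIV_cong) (simp add: algebra_simps)
qed

lemma poly4_props:
  fixes F :: "real \<Rightarrow> real"
  assumes F: "\<And>t. F t = c0 + c1*t + c2*t^2 + c3*t^3 + c4*t^4"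
  shows "(F has_real_derivative D) (at 0) \<Longrightarrow> D = c1"
    and "deriv (deriv F) 0 = 2*c2"
proof -
  show "(F has_real_derivative D) (at 0) \<Longrightarrow> D = c1"
  proof -
    assume "(F has_real_derivative D) (at 0)"
    moreover have "(F has_real_derivative c1) (at 0)" using poly4_deriv[OF F, of 0] by simp
    ultimately show "D = c1" by (rule DERIV_unique)
  qed
  have dF: "deriv F t = c1 + (2*c2)*t + (3*c3)*t^2 + (4*c4)*t^3 + 0*t^4" for t
    using DERIV_imp_deriv[OF poly4_deriv[OF F, of t]] by (simp add: algebra_simps)
  have "(deriv F has_real_derivative (2*c2)) (at 0)"
    using poly4_deriv[OF dF, of 0] by simp
  then show "deriv (deriv F) 0 = 2*c2" by (rule DERIV_imp_deriv)
qed

lemma quad_zero: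
  fixes aa cc :: real
  assumes "\<And>x. x^2 * aa + x * cc \<ge> 0"
  shows "cc = 0"
proof (rule ccontr)
  assume cc0: "cc \<noteq> 0"
  define x where "x = - cc / ((abs aa) + 1)"
  have pos: "(abs aa) + 1 > 0" by simp
  have "x^2 * aa \<le> x^2 * (abs aa)" by (simp add: mult_left_mono)
  also have "x^2 * (abs aa) = cc^2 * (abs aa) / ((abs aa) + 1)^2" by (simp add: x_def power_divide)
  finally have "x^2 * aa + x * cc \<le> cc^2 * (abs aa) / ((abs aa) + 1)^2 - cc^2 / ((abs aa) + 1)"
    by (simp add: x_def power2_eq_square)
  also have "\<dots> = -(cc^2) / ((abs aa) + 1)^2"
  proof -
    have "c^2 * t / (t + 1)^2 - c^2 / (t + 1) = -(c^2) / (t + 1)^2" if "t + 1 > 0" for t c :: real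
    proof -
      have ne: "t + 1 \<noteq> 0" using that by simp
      have "c^2 / (t + 1) = c^2 * (t + 1) / (t + 1)^2" using ne by (simp add: power2_eq_square)
      then have "c^2 * t / (t + 1)^2 - c^2 / (t + 1) = (c^2 * t - c^2 * (t + 1)) / (t + 1)^2"
        by (simp add: diff_divide_distrib)
      also have "c^2 * t - c^2 * (t + 1) = -(c^2)" by (simp add: algebra_simps)
      finally show ?thesis by simp
    qed
    then show ?thesis using pos by blast
  qed
  also have "\<dots> < 0" using cc0 pos by simp
  finally show False using assms[of x] by simp
qed


lemma sm2: "smult (2*t) x = smult t x + smult t (x :: real poly)"
  unfolding mult_2 by (rule smult_add_left)
lemma r: "a1 + b1 + c1 + (a2 + b2 + c2) = (a1 + a2) + (b1 + b2) + (c1 + c2)" for a1 b1 c1 a2 b2 c2 :: "real poly"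
    by (simp add: ac_simps)
lemma sq1a: "(x + smult t y) * (x + smult t y) = x * x + (smult t (x * y) + smult t (y * x)) + smult (t*t) (y * y)"
    by (simp add: distrib_left distrib_right add.assoc smult_add_right add.left_commute)
lemma sq1: "(x + smult t y)^2 = x^2 + smult (2*t) (x * y) + smult (t^2) (y^2 :: real poly)"
proof -
  have "(x + smult t y)^2 = x * x + (smult t (x * y) + smult t (y * x)) + smult (t*t) (y * y)"
    using sq1a by (simp only: power2_eq_square)
  also have "\<dots> = x^2 + smult (2*t) (x * y) + smult (t^2) (y^2)"
    by (simp only: mult.commute[of y x] sm2 power2_eq_square)
  finally show ?thesis .
qed
lemma sq2: "(u1 + smult t v1)^2 + (u2 + smult t v2)^2 = (u1^2 + u2^2) + smult (2*t) (u1 * v1 + u2 * v2) + smult (t^2) (v1^2 + v2^2 :: real poly)"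
  unfolding sq1 smult_add_right by (rule r)

theorem corollary6p3:
  fixes d :: nat and B :: "real poly \<Rightarrow> 'a::euclidean_space" and b :: 'a
    and u :: "real poly \<times> real poly"
  assumes lin: "linear_on_forms (2 * d) B"
    and feas: "\<exists>p\<in>sos_forms d. B p = b"
    and u_in: "fst u \<in> binary_forms d" "snd u \<in> binary_forms d"
    and grad: "\<forall>v. fst v \<in> binary_forms d \<and> snd v \<in> binary_forms d \<longrightarrow>
                 ((\<lambda>t. f_B B b (line_pt u v t)) has_real_derivative 0) (at 0)"
    and hess: "\<forall>v. fst v \<in> binary_forms d \<and> snd v \<in> binary_forms d \<longrightarrow>
                 deriv (deriv (\<lambda>t. f_B B b (line_pt u v t))) 0 \<ge> 0"
  shows "f_B B b u = 0"
proof -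
  define u1 where "u1 = fst u"
  define u2 where "u2 = snd u"
  have du1: "degree u1 \<le> d" and du2: "degree u2 \<le> d"
    using u_in by (auto simp: u1_def u2_def binary_forms_def)
  obtain p where pS: "p \<in> sos_forms d" and Bp: "B p = b" using feas by blast
  obtain qs where qs: "set qs \<subseteq> binary_forms d" "p = sum_list (map (\<lambda>q. q^2) qs)"
    using pS by (auto simp: sos_forms_def)
  have Badd: "B (x + y) = B x + B y" if "degree x \<le> 2*d" "degree y \<le> 2*d" for x y
    using lin that by (simp add: linear_on_forms_def binary_forms_def)
  have Bsm: "B (smult c x) = c *\<^sub>R B x" if "degree x \<le> 2*d" for c x
    using lin that by (simp add: linear_on_forms_def binary_forms_def)
  have B0: "B 0 = 0" using Bsm[of 0 0] by simp
  define r where "r = B (u1^2 + u2^2) - b"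
  define tr :: "real poly \<Rightarrow> real poly" where "tr x = (\<Sum>i\<le>2*d. monom (coeff x i) i)" for x
  have coeff_tr: "coeff (tr x) j = (if j \<le> 2*d then coeff x j else 0)" for x j
  proof -
    have "coeff (tr x) j = (\<Sum>i\<le>2*d. if i = j then coeff x i else 0)"
      by (simp add: tr_def coeff_sum coeff_monom)
    also have "\<dots> = (if j \<le> 2*d then coeff x j else 0)" by (simp add: sum.delta)
    finally show ?thesis .
  qed
  have dtr: "degree (tr x) \<le> 2*d" for x by (rule degree_le) (simp add: coeff_tr)
  have tr_id: "tr x = x" if "degree x \<le> 2*d" for x
    using that by (simp add: tr_def poly_as_sum_of_monoms')
  have tr_add: "tr (x + y) = tr x + tr y" for x y by (rule poly_eqI) (simp add: coeff_tr)
  have tr_sm: "tr (smult c x) = smult c (tr x)" for c x by (rule poly_eqI) (simp add: coeff_tr)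
  define L where "L x = r \<bullet> B (tr x)" for x
  have Ladd: "L (x + y) = L x + L y" for x y
    by (simp add: L_def tr_add Badd[OF dtr dtr] inner_add_right)
  have Lsm: "L (smult c x) = c * L x" for c x
    by (simp add: L_def tr_sm Bsm[OF dtr])
  have LB: "L x = r \<bullet> B x" if "degree x \<le> 2*d" for x
    using that by (simp add: L_def tr_id)
  have dprod: "degree (x * y) \<le> 2*d" if "degree x \<le> d" "degree y \<le> d" for x y
    using degree_mult_le[of x y] that by simp
  have main: "L (u1 * v1 + u2 * v2) = 0 \<and>
      2 * (B (u1 * v1 + u2 * v2) \<bullet> B (u1 * v1 + u2 * v2)) + L (v1^2 + v2^2) \<ge> 0"
    if dv: "degree v1 \<le> d" "degree v2 \<le> d" for v1 v2
  proof -
    define P1 where "P1 = u1 * v1 + u2 * v2"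
    define P2 where "P2 = v1^2 + v2^2"
    define q where "q = u1^2 + u2^2"
    define X where "X = B P1"
    define Y where "Y = B P2"
    have dP1: "degree P1 \<le> 2*d" unfolding P1_def
      using degree_add_le dprod[OF du1 dv(1)] dprod[OF du2 dv(2)] by blast
    have dP2: "degree P2 \<le> 2*d" unfolding P2_def power2_eq_square
      using degree_add_le dprod[OF dv(1) dv(1)] dprod[OF dv(2) dv(2)] by blast
    have dq: "degree q \<le> 2*d" unfolding q_def power2_eq_square
      using degree_add_le dprod[OF du1 du1] dprod[OF du2 du2] by blast
    have sq: "(u1 + smult t v1)^2 + (u2 + smult t v2)^2 = q + smult (2*t) P1 + smult (t^2) P2" for t
      unfolding q_def P1_def P2_def by (rule sq2)
    have Bline: "B (q + smult (2*t) P1 + smult (t^2) P2) = B q + (2*t) *\<^sub>R X + (t^2) *\<^sub>R Y" for t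
    proof -
      have d1: "degree (smult (2*t) P1) \<le> 2*d" using degree_smult_le[of "2*t" P1] dP1 by linarith
      have d2: "degree (smult (t^2) P2) \<le> 2*d" using degree_smult_le[of "t^2" P2] dP2 by linarith
      have d3: "degree (q + smult (2*t) P1) \<le> 2*d" using degree_add_le[OF dq d1] .
      show ?thesis using Badd[OF d3 d2] Badd[OF dq d1] Bsm[OF dP1] Bsm[OF dP2] X_def Y_def by simp
    qed
    define c0 where "c0 = r \<bullet> r"
    define c1 where "c1 = 4 * (r \<bullet> X)"
    define c2 where "c2 = 4 * (X \<bullet> X) + 2 * (r \<bullet> Y)"
    define c3 where "c3 = 4 * (X \<bullet> Y)"
    define c4 where "c4 = Y \<bullet> Y"
    have fexp: "f_B B b (line_pt u (v1, v2) t) = c0 + c1*t + c2*t^2 + c3*t^3 + c4*t^4" for t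
    proof -
      have "f_B B b (line_pt u (v1, v2) t) = (norm (B q + (2*t) *\<^sub>R X + (t^2) *\<^sub>R Y - b))^2"
        by (simp add: f_B_def line_pt_def u1_def[symmetric] u2_def[symmetric] sq Bline)
      also have "B q + (2*t) *\<^sub>R X + (t^2) *\<^sub>R Y - b = r + (2*t) *\<^sub>R X + (t^2) *\<^sub>R Y"
        by (simp add: r_def q_def algebra_simps)
      also have "(norm (r + (2*t) *\<^sub>R X + (t^2) *\<^sub>R Y))^2 =
          r \<bullet> r + (2*t)^2*(X \<bullet> X) + (t^2)^2*(Y \<bullet> Y) + 2*(2*t)*(r \<bullet> X)
          + 2*t^2*(r \<bullet> Y) + 2*(2*t)*t^2*(X \<bullet> Y)"
      proof -
        have ip: "(a + b' + c) \<bullet> (a + b' + c) = a \<bullet> a + b' \<bullet> b' + c \<bullet> c + 2*(a \<bullet> b') + 2*(a \<bullet> c) + 2*(b' \<bullet> c)"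
          for a b' c :: 'a
          by (simp add: inner_add_left inner_add_right inner_commute)
        have "(norm (r + (2*t) *\<^sub>R X + (t^2) *\<^sub>R Y))^2 =
           (r + (2*t) *\<^sub>R X + (t^2) *\<^sub>R Y) \<bullet> (r + (2*t) *\<^sub>R X + (t^2) *\<^sub>R Y)"
          by (rule power2_norm_eq_inner)
        also have "\<dots> = r \<bullet> r + ((2*t) *\<^sub>R X) \<bullet> ((2*t) *\<^sub>R X) + ((t^2) *\<^sub>R Y) \<bullet> ((t^2) *\<^sub>R Y)
            + 2*(r \<bullet> ((2*t) *\<^sub>R X)) + 2*(r \<bullet> ((t^2) *\<^sub>R Y)) + 2*(((2*t) *\<^sub>R X) \<bullet> ((t^2) *\<^sub>R Y))"
          by (rule ip)
        also have "\<dots> = r \<bullet> r + (2*t)^2*(X \<bullet> X) + (t^2)^2*(Y \<bullet> Y) + 2*(2*t)*(r \<bullet> X)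
          + 2*t^2*(r \<bullet> Y) + 2*(2*t)*t^2*(X \<bullet> Y)"
          by (simp only: inner_scaleR_left inner_scaleR_right power2_eq_square)
        finally show ?thesis .
      qed
      also have "\<dots> = c0 + c1*t + c2*t^2 + c3*t^3 + c4*t^4"
        unfolding c0_def c1_def c2_def c3_def c4_def
        by (simp add: algebra_simps power2_eq_square power3_eq_cube numeral_eq_Suc)
      finally show ?thesis .
    qed
    have vin: "fst (v1, v2) \<in> binary_forms d \<and> snd (v1, v2) \<in> binary_forms d"
      using dv by (simp add: binary_forms_def)
    have "c1 = 0"
      using poly4_props(1)[OF fexp] grad vin by blast
    moreover have "2 * c2 \<ge> 0"
    proof -
      have "deriv (deriv (\<lambda>t. f_B B b (line_pt u (v1, v2) t))) 0 \<ge> 0" using hess vin by blast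
      then show ?thesis using poly4_props(2)[OF fexp] by simp
    qed
    ultimately show ?thesis
      using LB[OF dP1] LB[OF dP2]
      by (simp add: c1_def c2_def X_def Y_def P1_def P2_def)
  qed
  have Lsq: "L (s^2) \<ge> 0" if ds: "degree s \<le> d" for s
  proof (rule core[of L u1 d u2 s])
    show "L (x + y) = L x + L y" for x y by (rule Ladd)
    show "L (smult c x) = c * L x" for c x by (rule Lsm)
    show "degree u1 \<le> d" "degree u2 \<le> d" "degree s \<le> d" using du1 du2 ds by auto
    show "L (u1 * w) = 0" if "degree w \<le> d" for w using main[OF that, of 0] by simp
    show "L (u2 * w) = 0" if "degree w \<le> d" for w using main[of 0 w] that by simp
    show "L (n1^2 + n2^2) \<ge> 0" if "degree n1 \<le> d" "degree n2 \<le> d" "u1 * n1 + u2 * n2 = 0" for n1 n2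
      using main[OF that(1,2)] that(3) B0 by simp
    show "L (n1 * w) = 0 \<and> L (n2 * w) = 0"
      if n: "degree n1 \<le> d" "degree n2 \<le> d" "u1 * n1 + u2 * n2 = 0" "L (n1^2 + n2^2) = 0"
        "degree w \<le> d" for n1 n2 w
    proof
      have duw: "degree (u1 * w) \<le> 2*d" using dprod[OF du1 n(5)] .
      have duw2: "degree (u2 * w) \<le> 2*d" using dprod[OF du2 n(5)] .
      have "2 * L (n1 * w) = 0"
      proof (rule quad_zero)
        fix x :: real
        have dv: "degree (n1 + smult x w) \<le> d"
          using degree_add_le[OF n(1) order.trans[OF degree_smult_le n(5)]] .
        have "u1 * (n1 + smult x w) + u2 * n2 = (u1 * n1 + u2 * n2) + smult x (u1 * w)"
          by (simp add: distrib_left add_ac)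
        then have e1: "u1 * (n1 + smult x w) + u2 * n2 = smult x (u1 * w)"
          using n(3) by simp
        have e2: "(n1 + smult x w)^2 + n2^2 = (n1^2 + n2^2) + smult (2*x) (n1 * w) + smult (x^2) (w^2)"
          by (simp only: sq1)
        have "2 * (B (smult x (u1 * w)) \<bullet> B (smult x (u1 * w))) + L ((n1^2 + n2^2) + smult (2*x) (n1 * w) + smult (x^2) (w^2)) \<ge> 0"
          using main[OF dv n(2)] e1 e2 by simp
        then show "x^2 * (2 * (B (u1 * w) \<bullet> B (u1 * w)) + L (w^2)) + x * (2 * L (n1 * w)) \<ge> 0"
          using n(4) by (simp add: Bsm[OF duw] Ladd Lsm algebra_simps power2_eq_square)
      qed
      then show "L (n1 * w) = 0" by simp
      have "2 * L (n2 * w) = 0"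
      proof (rule quad_zero)
        fix x :: real
        have dv: "degree (n2 + smult x w) \<le> d"
          using degree_add_le[OF n(2) order.trans[OF degree_smult_le n(5)]] .
        have "u1 * n1 + u2 * (n2 + smult x w) = (u1 * n1 + u2 * n2) + smult x (u2 * w)"
          by (simp add: distrib_left add_ac)
        then have e1: "u1 * n1 + u2 * (n2 + smult x w) = smult x (u2 * w)"
          using n(3) by simp
        have e2: "n1^2 + (n2 + smult x w)^2 = (n1^2 + n2^2) + smult (2*x) (n2 * w) + smult (x^2) (w^2)"
          by (simp only: sq1 ac_simps)
        have "2 * (B (smult x (u2 * w)) \<bullet> B (smult x (u2 * w))) + L ((n1^2 + n2^2) + smult (2*x) (n2 * w) + smult (x^2) (w^2)) \<ge> 0"
          using main[OF n(1) dv] e1 e2 by simp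
        then show "x^2 * (2 * (B (u2 * w) \<bullet> B (u2 * w)) + L (w^2)) + x * (2 * L (n2 * w)) \<ge> 0"
          using n(4) by (simp add: Bsm[OF duw2] Ladd Lsm algebra_simps power2_eq_square)
      qed
      then show "L (n2 * w) = 0" by simp
    qed
  qed
  have sumq: "\<forall>qs'. set qs' \<subseteq> binary_forms d \<longrightarrow>
      degree (sum_list (map (\<lambda>q. q^2) qs')) \<le> 2*d \<and> L (sum_list (map (\<lambda>q. q^2) qs')) \<ge> 0"
  proof
    fix qs' :: "real poly list"
    show "set qs' \<subseteq> binary_forms d \<longrightarrow>
      degree (sum_list (map (\<lambda>q. q^2) qs')) \<le> 2*d \<and> L (sum_list (map (\<lambda>q. q^2) qs')) \<ge> 0"
    proof (induction qs')
      case Nil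
      then show ?case using Lsm[of 0 0] by simp
    next
      case (Cons a qs')
      show ?case
      proof
        assume "set (a # qs') \<subseteq> binary_forms d"
        then have da: "degree a \<le> d" and rest: "set qs' \<subseteq> binary_forms d"
          by (auto simp: binary_forms_def)
        have da2: "degree (a^2) \<le> 2*d" using dprod[OF da da] by (simp add: power2_eq_square)
        have IH: "degree (sum_list (map (\<lambda>q. q^2) qs')) \<le> 2*d"
            "L (sum_list (map (\<lambda>q. q^2) qs')) \<ge> 0" using Cons.IH rest by auto
        show "degree (sum_list (map (\<lambda>q. q^2) (a # qs'))) \<le> 2*d \<and>
            L (sum_list (map (\<lambda>q. q^2) (a # qs'))) \<ge> 0"
          using degree_add_le[OF da2 IH(1)] IH(2) Lsq[OF da] by (simp add: Ladd)
      qed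
    qed
  qed
  have dp: "degree p \<le> 2*d" and Lp: "L p \<ge> 0" using sumq qs by auto
  have dq: "degree (u1^2 + u2^2) \<le> 2*d" unfolding power2_eq_square
    using degree_add_le dprod[OF du1 du1] dprod[OF du2 du2] by blast
  have Lq: "L (u1^2 + u2^2) = 0" using main[OF du1 du2] by (simp add: power2_eq_square)
  have "r \<bullet> r = r \<bullet> B (u1^2 + u2^2) - r \<bullet> B p" by (simp add: r_def Bp inner_diff_right)
  also have "\<dots> = L (u1^2 + u2^2) - L p" using LB[OF dq] LB[OF dp] by simp
  finally have "r \<bullet> r \<le> 0" using Lq Lp by simp
  then have "r \<bullet> r = 0" using inner_ge_zero[of r] by linarith
  then show ?thesis by (simp add: f_B_def r_def u1_def u2_def power2_norm_eq_inner)
qed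

end
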